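(* Let $\mu,\nu$ be Borel probability measures on $\mathbb{R}$. Then $$W_1(\mu,\nu)=W_1(\mu^l,\nu^l)+W_1(\mu^r,\nu^r),$$ where $\mu^l,\mu^r$ (and likewise $\nu^l,\nu^r$) are defined below.
   Context: For a probability measure $\mu$ on $\mathbb{R}$ let $B(\mu)=\sup\{x\in\mathbb{R}:\mu(-\infty,x]\le\tfrac12\}$ and, when $\mu\{B(\mu)\}>0$, $b_\mu=\bigl(\tfrac12-\mu(-\infty,B(\mu))\bigr)/\mu\{B(\mu)\}$ (when $\mu\{B(\mu)\}=0$ the atom terms below vanish). Define $\mu^l=\mu\,\mathbf 1_{(-\infty,B(\mu))}+b_\mu\,\mu\{B(\mu)\}\,\delta_{B(\mu)}$ and $\mu^r=\mu\,\mathbf 1_{(B(\mu),\infty)}+(1-b_\mu)\,\mu\{B(\mu)\}\,\delta_{B(\mu)}$; these are nonnegative measures of mass $\tfrac12$ each. For nonnegative finite measures $\alpha,\beta$ on $\mathbb{R}$ of equal mass, $W_1(\alpha,\beta)=\inf\int|x-y|\,d\gamma(x,y)$ over all nonnegative measures $\gamma$ on $\mathbb{R}^2$ with marginals $\alpha$ and $\beta$. *)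

theory Defs
  imports "HOL-Probability.Probability"
begin

definition medB :: "real measure \<Rightarrow> real" where
  "medB \<mu> = Sup {x. measure \<mu> {..x} \<le> 1/2}"

text \<open>b_mu; when the atom at B(mu) has mass 0 the atom terms vanish, value irrelevant (set to 0).\<close>
definition bcoef :: "real measure \<Rightarrow> real" where
  "bcoef \<mu> = (if measure \<mu> {medB \<mu>} > 0
      then (1/2 - measure \<mu> {..<medB \<mu>}) / measure \<mu> {medB \<mu>} else 0)"

text \<open>mu^l = mu restricted to (-inf,B) + b_mu mu{B} delta_B, written as a density w.r.t. mu.\<close>
definition lpart :: "real measure \<Rightarrow> real measure" where
  "lpart \<mu> = density \<mu> (\<lambda>x. ennreal (indicator {..<medB \<mu>} x
      + (if x = medB \<mu> then bcoef \<mu> else 0)))"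

text \<open>mu^r = mu restricted to (B,inf) + (1 - b_mu) mu{B} delta_B.\<close>
definition rpart :: "real measure \<Rightarrow> real measure" where
  "rpart \<mu> = density \<mu> (\<lambda>x. ennreal (indicator {medB \<mu><..} x
      + (if x = medB \<mu> then 1 - bcoef \<mu> else 0)))"

definition couplings :: "real measure \<Rightarrow> real measure \<Rightarrow> (real \<times> real) measure set" where
  "couplings \<alpha> \<beta> = {\<gamma>. sets \<gamma> = sets (borel :: (real \<times> real) measure)
      \<and> distr \<gamma> borel fst = \<alpha> \<and> distr \<gamma> borel snd = \<beta>}"

definition W1 :: "real measure \<Rightarrow> real measure \<Rightarrow> ennreal" where
  "W1 \<alpha> \<beta> = (INF \<gamma>\<in>couplings \<alpha> \<beta>. \<integral>\<^sup>+ p. ennreal \<bar>fst p - snd p\<bar> \<partial>\<gamma>)"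

end

theory Submission
  imports Defs
begin


definition cost :: "(real \<times> real) measure \<Rightarrow> ennreal" where
  "cost \<gamma> = (\<integral>\<^sup>+ p. ennreal \<bar>fst p - snd p\<bar> \<partial>\<gamma>)"

lemma abs_as_integral:
  fixes x y :: real
  shows "ennreal \<bar>x - y\<bar> = (\<integral>\<^sup>+ t. (indicator {q. fst q \<le> t \<and> \<not> snd q \<le> t} (x,y)
      + indicator {q. snd q \<le> t \<and> \<not> fst q \<le> t} (x,y)) \<partial>lborel)"
proof -
  have "\<And>t. (indicator {q. fst q \<le> t \<and> \<not> snd q \<le> t} (x,y)
      + indicator {q. snd q \<le> t \<and> \<not> fst q \<le> t} (x,y) :: ennreal) = indicator {min x y..<max x y} t"
    by (auto simp: indicator_def)
  then have "(\<integral>\<^sup>+ t. (indicator {q. fst q \<le> t \<and> \<not> snd q \<le> t} (x,y)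
      + indicator {q. snd q \<le> t \<and> \<not> fst q \<le> t} (x,y)) \<partial>lborel) = emeasure lborel {min x y..<max x y}"
    by simp
  also have "\<dots> = ennreal \<bar>x - y\<bar>" by (simp add: abs_real_def max_def min_def)
  finally show ?thesis by simp
qed

lemma cost_layer:
  assumes sg: "sets \<gamma> = sets (borel :: (real \<times> real) measure)" and fin: "finite_measure \<gamma>"
  shows "cost \<gamma> = (\<integral>\<^sup>+ t. (emeasure \<gamma> {q. fst q \<le> t \<and> \<not> snd q \<le> t}
        + emeasure \<gamma> {q. snd q \<le> t \<and> \<not> fst q \<le> t}) \<partial>lborel)"
proof -
  interpret finite_measure \<gamma> by fact
  interpret pair_sigma_finite \<gamma> lborel
    by (simp add: lborel.sigma_finite_measure_axioms pair_sigma_finite.intro sigma_finite_measure_axioms)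
  have sg': "sets \<gamma> = sets (borel \<Otimes>\<^sub>M borel :: (real \<times> real) measure)"
    using sg borel_prod by metis
  have sp: "space \<gamma> = UNIV" using sets_eq_imp_space_eq[OF sg] by simp
  have meas: "(\<lambda>(p, t::real). (indicator {q. fst q \<le> t \<and> \<not> snd q \<le> t} p
      + indicator {q. snd q \<le> t \<and> \<not> fst q \<le> t} p :: ennreal)) \<in> borel_measurable (\<gamma> \<Otimes>\<^sub>M lborel)"
  proof -
    have "(\<lambda>(p, t::real). (indicator {q. fst q \<le> t \<and> \<not> snd q \<le> t} p
      + indicator {q. snd q \<le> t \<and> \<not> fst q \<le> t} p :: ennreal)) \<in> borel_measurable ((borel \<Otimes>\<^sub>M borel) \<Otimes>\<^sub>M borel)"
      unfolding indicator_def by measurable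
    then show ?thesis
      by (subst measurable_cong_sets[OF sets_pair_measure_cong[OF sg' sets_lborel] refl])
  qed
  have "cost \<gamma> = (\<integral>\<^sup>+ p. \<integral>\<^sup>+ t. (indicator {q. fst q \<le> t \<and> \<not> snd q \<le> t} p
      + indicator {q. snd q \<le> t \<and> \<not> fst q \<le> t} p) \<partial>lborel \<partial>\<gamma>)"
    unfolding cost_def by (rule nn_integral_cong) (use abs_as_integral[of "fst x" "snd x" for x] in simp)
  also have "\<dots> = (\<integral>\<^sup>+ t. \<integral>\<^sup>+ p. (indicator {q. fst q \<le> t \<and> \<not> snd q \<le> t} p
      + indicator {q. snd q \<le> t \<and> \<not> fst q \<le> t} p) \<partial>\<gamma> \<partial>lborel)"
    using Fubini'[OF meas] by simp
  also have "\<dots> = (\<integral>\<^sup>+ t. (emeasure \<gamma> {q. fst q \<le> t \<and> \<not> snd q \<le> t}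
        + emeasure \<gamma> {q. snd q \<le> t \<and> \<not> fst q \<le> t}) \<partial>lborel)"
  proof (rule nn_integral_cong)
    fix t :: real
    have "{q \<in> space (borel \<Otimes>\<^sub>M borel). fst q \<le> t \<and> \<not> snd q \<le> t} \<in> sets (borel \<Otimes>\<^sub>M borel :: (real\<times>real) measure)" by measurable
    then have s1: "{q. fst q \<le> t \<and> \<not> snd q \<le> t} \<in> sets \<gamma>" unfolding sg' by (simp add: space_pair_measure)
    have "{q \<in> space (borel \<Otimes>\<^sub>M borel). snd q \<le> t \<and> \<not> fst q \<le> t} \<in> sets (borel \<Otimes>\<^sub>M borel :: (real\<times>real) measure)" by measurable
    then have s2: "{q. snd q \<le> t \<and> \<not> fst q \<le> t} \<in> sets \<gamma>" unfolding sg' by (simp add: space_pair_measure)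
    show "(\<integral>\<^sup>+ p. (indicator {q. fst q \<le> t \<and> \<not> snd q \<le> t} p
      + indicator {q. snd q \<le> t \<and> \<not> fst q \<le> t} p) \<partial>\<gamma>) = emeasure \<gamma> {q. fst q \<le> t \<and> \<not> snd q \<le> t}
        + emeasure \<gamma> {q. snd q \<le> t \<and> \<not> fst q \<le> t}"
      using s1 s2 by (simp add: nn_integral_add)
  qed
  finally show ?thesis .
qed



lemma fst_snd_meas:
  assumes sg: "sets \<gamma> = sets (borel :: (real \<times> real) measure)"
  shows "fst \<in> borel_measurable \<gamma>" "snd \<in> borel_measurable \<gamma>"
proof -
  have sg': "sets \<gamma> = sets (borel \<Otimes>\<^sub>M borel :: (real \<times> real) measure)"
    using sg borel_prod by metis
  show "fst \<in> borel_measurable \<gamma>" "snd \<in> borel_measurable \<gamma>"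
    by (simp_all add: measurable_cong_sets[OF sg' refl])
qed

lemma coupling_finite:
  assumes sg: "sets \<gamma> = sets (borel :: (real \<times> real) measure)"
    and d: "distr \<gamma> borel fst = \<alpha>" and fa: "emeasure \<alpha> UNIV < \<infinity>"
  shows "finite_measure \<gamma>"
proof -
  have sp: "space \<gamma> = UNIV" using sets_eq_imp_space_eq[OF sg] by simp
  have "emeasure \<gamma> UNIV = emeasure (distr \<gamma> borel fst) UNIV"
    by (subst emeasure_distr) (auto simp: sp fst_snd_meas[OF sg])
  then show ?thesis using fa d by (intro finite_measureI) (simp add: sp)
qed

lemma coupling_marg:
  assumes sg: "sets \<gamma> = sets (borel :: (real \<times> real) measure)"
    and d1: "distr \<gamma> borel fst = \<alpha>" and d2: "distr \<gamma> borel snd = \<beta>"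
  shows "measure \<gamma> {q. fst q \<le> t} = measure \<alpha> {..t}" "measure \<gamma> {q. snd q \<le> t} = measure \<beta> {..t}"
proof -
  have sp: "space \<gamma> = UNIV" using sets_eq_imp_space_eq[OF sg] by simp
  have "measure (distr \<gamma> borel fst) {..t} = measure \<gamma> (fst -` {..t} \<inter> space \<gamma>)"
    by (rule measure_distr) (auto simp: fst_snd_meas[OF sg])
  then show "measure \<gamma> {q. fst q \<le> t} = measure \<alpha> {..t}" using d1 by (simp add: sp vimage_def)
  have "measure (distr \<gamma> borel snd) {..t} = measure \<gamma> (snd -` {..t} \<inter> space \<gamma>)"
    by (rule measure_distr) (auto simp: fst_snd_meas[OF sg])
  then show "measure \<gamma> {q. snd q \<le> t} = measure \<beta> {..t}" using d2 by (simp add: sp vimage_def)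
qed

lemma cost_lower:
  assumes sg: "sets \<gamma> = sets (borel :: (real \<times> real) measure)"
    and d1: "distr \<gamma> borel fst = \<alpha>" and d2: "distr \<gamma> borel snd = \<beta>"
    and fa: "emeasure \<alpha> UNIV < \<infinity>"
  shows "(\<integral>\<^sup>+ t. ennreal \<bar>measure \<alpha> {..t} - measure \<beta> {..t}\<bar> \<partial>lborel) \<le> cost \<gamma>"
proof -
  interpret finite_measure \<gamma> using coupling_finite[OF sg d1 fa] .
  have sg': "sets \<gamma> = sets (borel \<Otimes>\<^sub>M borel :: (real \<times> real) measure)"
    using sg borel_prod by metis
  show ?thesis
    unfolding cost_layer[OF sg finite_measure_axioms]
  proof (rule nn_integral_mono)
    fix t :: real
    let ?A = "{q::real\<times>real. fst q \<le> t}" and ?B = "{q::real\<times>real. snd q \<le> t}"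
    have "{q \<in> space (borel \<Otimes>\<^sub>M borel). fst q \<le> t} \<in> sets (borel \<Otimes>\<^sub>M borel :: (real\<times>real) measure)" by measurable
    then have A: "?A \<in> sets \<gamma>" unfolding sg' by (simp add: space_pair_measure)
    have "{q \<in> space (borel \<Otimes>\<^sub>M borel). snd q \<le> t} \<in> sets (borel \<Otimes>\<^sub>M borel :: (real\<times>real) measure)" by measurable
    then have B: "?B \<in> sets \<gamma>" unfolding sg' by (simp add: space_pair_measure)
    have e1: "{q. fst q \<le> t \<and> \<not> snd q \<le> t} = ?A - ?B" and e2: "{q. snd q \<le> t \<and> \<not> fst q \<le> t} = ?B - ?A"
      by auto
    have i1: "measure \<gamma> ?A \<le> measure \<gamma> (?A - ?B) + measure \<gamma> ?B"
      using measure_Un_le[of "?A - ?B" \<gamma> ?B] finite_measure_mono[of ?A "(?A - ?B) \<union> ?B"] A B by auto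
    have i2: "measure \<gamma> ?B \<le> measure \<gamma> (?B - ?A) + measure \<gamma> ?A"
      using measure_Un_le[of "?B - ?A" \<gamma> ?A] finite_measure_mono[of ?B "(?B - ?A) \<union> ?A"] A B by auto
    have "\<bar>measure \<alpha> {..t} - measure \<beta> {..t}\<bar> \<le> measure \<gamma> (?A - ?B) + measure \<gamma> (?B - ?A)"
      using i1 i2 coupling_marg[OF sg d1 d2, of t] measure_nonneg[of \<gamma> "?A - ?B"] measure_nonneg[of \<gamma> "?B - ?A"] by linarith
    then have "ennreal \<bar>measure \<alpha> {..t} - measure \<beta> {..t}\<bar> \<le> ennreal (measure \<gamma> (?A - ?B) + measure \<gamma> (?B - ?A))"
      by (rule ennreal_leI)
    also have "\<dots> = emeasure \<gamma> (?A - ?B) + emeasure \<gamma> (?B - ?A)"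
      by (simp add: emeasure_eq_measure ennreal_plus)
    finally show "ennreal \<bar>measure \<alpha> {..t} - measure \<beta> {..t}\<bar> \<le> emeasure \<gamma> {q. fst q \<le> t \<and> \<not> snd q \<le> t} +
         emeasure \<gamma> {q. snd q \<le> t \<and> \<not> fst q \<le> t}" unfolding e1 e2 .
  qed
qed



lemma fbm:
  fixes \<alpha> :: "real measure"
  assumes sa: "sets \<alpha> = sets borel" and ea: "emeasure \<alpha> UNIV = ennreal m" and m: "0 \<le> m"
  shows "finite_borel_measure \<alpha>" "measure \<alpha> (space \<alpha>) = m" "space \<alpha> = UNIV"
proof -
  show sp: "space \<alpha> = UNIV" using sets_eq_imp_space_eq[OF sa] by simp
  have "finite_measure \<alpha>" by (rule finite_measureI) (simp add: sp ea)
  then show "finite_borel_measure \<alpha>"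
    by (simp add: finite_borel_measure.intro finite_borel_measure_axioms.intro sa)
  show "measure \<alpha> (space \<alpha>) = m" using ea m by (simp add: sp measure_def)
qed

lemma quantile_galois:
  fixes \<alpha> :: "real measure"
  assumes sa: "sets \<alpha> = sets borel" and ea: "emeasure \<alpha> UNIV = ennreal m" and m: "0 < m"
    and u: "0 < u" "u < m"
  shows "Inf {x. u \<le> measure \<alpha> {..x}} \<le> x \<longleftrightarrow> u \<le> measure \<alpha> {..x}"
proof -
  interpret finite_borel_measure \<alpha> using fbm[OF sa ea] m by simp
  have cdf: "cdf \<alpha> = (\<lambda>x. measure \<alpha> {..x})" by (simp add: cdf_def2 fun_eq_iff)
  have mm: "measure \<alpha> (space \<alpha>) = m" using fbm[OF sa ea] m by simp
  define S where "S = {x. u \<le> measure \<alpha> {..x}}"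
  have "eventually (\<lambda>x. measure \<alpha> {..x} > u) at_top"
    using cdf_lim_at_top u unfolding cdf mm by (simp add: order_tendstoD(1))
  then obtain x1 where "x1 \<in> S" unfolding S_def eventually_at_top_linorder by (auto intro: less_imp_le)
  then have ne: "S \<noteq> {}" by auto
  have "eventually (\<lambda>x. measure \<alpha> {..x} < u) at_bot"
    using cdf_lim_at_bot u unfolding cdf by (simp add: order_tendstoD(2))
  then obtain x0 where x0: "\<And>x. x \<le> x0 \<Longrightarrow> measure \<alpha> {..x} < u" unfolding eventually_at_bot_linorder by auto
  have bdd: "bdd_below S"
    unfolding bdd_below_def S_def using x0 by (metis linorder_not_le mem_Collect_eq order_less_imp_le order_less_le_trans)
  have upc: "y \<in> S" if "x \<in> S" "x \<le> y" for x y
    using that cdf_nondecreasing unfolding S_def cdf by (auto intro: order_trans)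
  have inS: "Inf S \<in> S"
  proof -
    have "eventually (\<lambda>s. u \<le> measure \<alpha> {..s}) (at_right (Inf S))"
    proof (rule eventually_at_rightI[of _ "Inf S + 1"])
      fix s assume "s \<in> {Inf S<..<Inf S + 1}"
      then have "Inf S < s" by simp
      then obtain s' where "s' \<in> S" "s' < s" using cInf_lessD[OF ne] by blast
      then show "u \<le> measure \<alpha> {..s}" using upc[of s' s] unfolding S_def by auto
    qed simp
    moreover have "((\<lambda>x. measure \<alpha> {..x}) \<longlongrightarrow> measure \<alpha> {..Inf S}) (at_right (Inf S))"
      using cdf_is_right_cont[of "Inf S"] unfolding cdf continuous_within by simp
    ultimately have "u \<le> measure \<alpha> {..Inf S}"
      by (intro tendsto_lowerbound) auto
    then show ?thesis unfolding S_def by simp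
  qed
  show ?thesis
  proof
    assume "Inf {x. u \<le> measure \<alpha> {..x}} \<le> x"
    then show "u \<le> measure \<alpha> {..x}" using upc[OF inS] unfolding S_def by auto
  next
    assume "u \<le> measure \<alpha> {..x}"
    then show "Inf {x. u \<le> measure \<alpha> {..x}} \<le> x" using cInf_lower[OF _ bdd] unfolding S_def by auto
  qed
qed

lemma lborel_Ioo_Ioc:
  fixes a b m :: real
  assumes "0 \<le> a" "a \<le> m" "0 \<le> b" "b \<le> m"
  shows "emeasure lborel ({0<..<m} \<inter> {a<..b}) = ennreal (b - a)"
proof (cases "a \<le> b")
  case True
  have "emeasure lborel {a<..<b} \<le> emeasure lborel ({0<..<m} \<inter> {a<..b})"
    by (rule emeasure_mono) (use assms in auto)
  moreover have "emeasure lborel ({0<..<m} \<inter> {a<..b}) \<le> emeasure lborel {a..b}"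
    by (rule emeasure_mono) auto
  ultimately show ?thesis using True by (simp add: antisym)
next
  case False
  then have "{0<..<m} \<inter> {a<..b} = {}" by auto
  then show ?thesis using False by (simp add: ennreal_neg)
qed



lemma Lfacts:
  fixes m :: real assumes m: "0 < m"
  shows "space (restrict_space lborel {0<..<m}) = {0<..<m}"
    and "\<And>A. A \<subseteq> {0<..<m} \<Longrightarrow> emeasure (restrict_space lborel {0<..<m}) A = emeasure lborel A"
    and "\<And>A. A \<in> sets (restrict_space lborel {0<..<m}) \<longleftrightarrow> A \<subseteq> {0<..<m} \<and> A \<in> sets borel"
    and "finite_measure (restrict_space lborel {0<..<m})"
proof -
  show sp: "space (restrict_space lborel {0<..<m}) = {0<..<m}" by (simp add: space_restrict_space)
  show em: "\<And>A. A \<subseteq> {0<..<m} \<Longrightarrow> emeasure (restrict_space lborel {0<..<m}) A = emeasure lborel A"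
    by (rule emeasure_restrict_space) auto
  show "\<And>A. A \<in> sets (restrict_space lborel {0<..<m}) \<longleftrightarrow> A \<subseteq> {0<..<m} \<and> A \<in> sets borel"
    by (subst sets_restrict_space_iff) auto
  show "finite_measure (restrict_space lborel {0<..<m})"
    by (rule finite_measureI) (simp add: sp em emeasure_lborel_Ioo m less_imp_le)
qed

lemma quantile_meas:
  fixes \<alpha> :: "real measure"
  assumes sa: "sets \<alpha> = sets borel" and ea: "emeasure \<alpha> UNIV = ennreal m" and m: "0 < m"
  shows "(\<lambda>u. Inf {x. u \<le> measure \<alpha> {..x}}) \<in> borel_measurable (restrict_space lborel {0<..<m})"
proof (rule borel_measurable_iff_le[THEN iffD2], intro allI)
  fix a :: real
  have "{w \<in> space (restrict_space lborel {0<..<m}). Inf {x. w \<le> measure \<alpha> {..x}} \<le> a}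
      = {0<..<m} \<inter> {..measure \<alpha> {..a}}"
    using quantile_galois[OF sa ea m] by (auto simp: Lfacts(1)[OF m])
  then show "{w \<in> space (restrict_space lborel {0<..<m}). Inf {x. w \<le> measure \<alpha> {..x}} \<le> a}
      \<in> sets (restrict_space lborel {0<..<m})"
    by (simp add: Lfacts(3)[OF m])
qed

lemma quantile_distr:
  fixes \<alpha> :: "real measure"
  assumes sa: "sets \<alpha> = sets borel" and ea: "emeasure \<alpha> UNIV = ennreal m" and m: "0 < m"
  shows "distr (restrict_space lborel {0<..<m}) borel (\<lambda>u. Inf {x. u \<le> measure \<alpha> {..x}}) = \<alpha>"
proof -
  let ?L = "restrict_space lborel {0<..<m}" and ?Q = "\<lambda>u. Inf {x. u \<le> measure \<alpha> {..x}}"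
  interpret fa: finite_borel_measure \<alpha> using fbm[OF sa ea] m by simp
  have mm: "measure \<alpha> (space \<alpha>) = m" using fbm[OF sa ea] m by simp
  interpret L: finite_measure ?L using Lfacts(4)[OF m] .
  have fd: "finite_borel_measure (distr ?L borel ?Q)"
  proof -
    have "finite_measure (distr ?L borel ?Q)"
      by (rule L.finite_measure_distr) (rule quantile_meas[OF sa ea m])
    then show ?thesis
      by (simp add: finite_borel_measure.intro finite_borel_measure_axioms.intro)
  qed
  have "cdf (distr ?L borel ?Q) = cdf \<alpha>"
  proof
    fix x
    have F0: "0 \<le> measure \<alpha> {..x}" and F1: "measure \<alpha> {..x} \<le> m"
      using fa.cdf_nonneg[of x] fa.cdf_bounded[of x] mm by (auto simp: cdf_def2)
    have e: "?Q -` {..x} \<inter> space ?L = {0<..<m} \<inter> {0<..measure \<alpha> {..x}}"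
      using quantile_galois[OF sa ea m] by (auto simp: Lfacts(1)[OF m])
    have "emeasure (distr ?L borel ?Q) {..x} = emeasure ?L (?Q -` {..x} \<inter> space ?L)"
      by (rule emeasure_distr) (auto intro: quantile_meas[OF sa ea m])
    also have "\<dots> = emeasure lborel ({0<..<m} \<inter> {0<..measure \<alpha> {..x}})"
      unfolding e by (rule Lfacts(2)[OF m]) auto
    also have "\<dots> = ennreal (measure \<alpha> {..x})"
      using lborel_Ioo_Ioc[of 0 m "measure \<alpha> {..x}"] F0 F1 m by simp
    finally show "cdf (distr ?L borel ?Q) x = cdf \<alpha> x"
      using F0 by (simp add: cdf_def2 measure_def)
  qed
  then show ?thesis using cdf_unique'[OF fd fa.finite_borel_measure_axioms] by simp
qed



lemma sets_S1:
  fixes t :: real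
  shows "{q::real\<times>real. fst q \<le> t \<and> \<not> snd q \<le> t} \<in> sets borel"
proof -
  have "{q \<in> space (borel \<Otimes>\<^sub>M borel). fst q \<le> t \<and> \<not> snd q \<le> t} \<in> sets (borel \<Otimes>\<^sub>M borel :: (real\<times>real) measure)"
    by measurable
  then have "{q::real\<times>real. fst q \<le> t \<and> \<not> snd q \<le> t} \<in> sets (borel \<Otimes>\<^sub>M borel :: (real\<times>real) measure)" by (simp add: space_pair_measure)
  then show ?thesis unfolding borel_prod .
qed

lemma sets_S2:
  fixes t :: real
  shows "{q::real\<times>real. snd q \<le> t \<and> \<not> fst q \<le> t} \<in> sets borel"
proof -
  have "{q \<in> space (borel \<Otimes>\<^sub>M borel). snd q \<le> t \<and> \<not> fst q \<le> t} \<in> sets (borel \<Otimes>\<^sub>M borel :: (real\<times>real) measure)"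
    by measurable
  then have "{q::real\<times>real. snd q \<le> t \<and> \<not> fst q \<le> t} \<in> sets (borel \<Otimes>\<^sub>M borel :: (real\<times>real) measure)" by (simp add: space_pair_measure)
  then show ?thesis unfolding borel_prod .
qed

lemma W1_cdf:
  fixes \<alpha> \<beta> :: "real measure"
  assumes sa: "sets \<alpha> = sets borel" and ea: "emeasure \<alpha> UNIV = ennreal m"
    and sb: "sets \<beta> = sets borel" and eb: "emeasure \<beta> UNIV = ennreal m" and m: "0 < m"
  shows "W1 \<alpha> \<beta> = (\<integral>\<^sup>+ t. ennreal \<bar>measure \<alpha> {..t} - measure \<beta> {..t}\<bar> \<partial>lborel)"
proof (rule antisym)
  let ?L = "restrict_space lborel {0<..<m}"
  let ?Qa = "\<lambda>u. Inf {x. u \<le> measure \<alpha> {..x}}" and ?Qb = "\<lambda>u. Inf {x. u \<le> measure \<beta> {..x}}"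
  let ?QQ = "\<lambda>u. (?Qa u, ?Qb u)"
  let ?g = "distr ?L borel ?QQ"
  have W: "W1 \<alpha> \<beta> = (INF \<gamma>\<in>couplings \<alpha> \<beta>. cost \<gamma>)" unfolding W1_def cost_def ..
  have mQa: "?Qa \<in> borel_measurable ?L" by (rule quantile_meas[OF sa ea m])
  have mQb: "?Qb \<in> borel_measurable ?L" by (rule quantile_meas[OF sb eb m])
  have mQQ: "?QQ \<in> ?L \<rightarrow>\<^sub>M borel"
  proof -
    have "?QQ \<in> ?L \<rightarrow>\<^sub>M borel \<Otimes>\<^sub>M borel" using mQa mQb by (rule measurable_Pair)
    then show ?thesis by (simp add: borel_prod)
  qed
  have sg: "sets ?g = sets (borel :: (real \<times> real) measure)" by simp
  have mf: "fst \<in> (borel :: (real \<times> real) measure) \<rightarrow>\<^sub>M borel"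
    and ms: "snd \<in> (borel :: (real \<times> real) measure) \<rightarrow>\<^sub>M borel"
    using measurable_fst[of "borel :: real measure" "borel :: real measure"]
      measurable_snd[of "borel :: real measure" "borel :: real measure"] by (simp_all add: borel_prod)
  have d1: "distr ?g borel fst = \<alpha>"
    using distr_distr[OF mf mQQ] quantile_distr[OF sa ea m] by (simp add: comp_def)
  have d2: "distr ?g borel snd = \<beta>"
    using distr_distr[OF ms mQQ] quantile_distr[OF sb eb m] by (simp add: comp_def)
  have gc: "?g \<in> couplings \<alpha> \<beta>" unfolding couplings_def using sg d1 d2 by simp
  have fa: "emeasure \<alpha> UNIV < \<infinity>" using ea by simp
  interpret g: finite_measure ?g using coupling_finite[OF sg d1 fa] .
  have cg: "cost ?g = (\<integral>\<^sup>+ t. ennreal \<bar>measure \<alpha> {..t} - measure \<beta> {..t}\<bar> \<partial>lborel)"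
    unfolding cost_layer[OF sg g.finite_measure_axioms]
  proof (rule nn_integral_cong)
    fix t :: real
    interpret fa: finite_borel_measure \<alpha> using fbm[OF sa ea] m by simp
    interpret fb: finite_borel_measure \<beta> using fbm[OF sb eb] m by simp
    have Fa: "0 \<le> measure \<alpha> {..t}" "measure \<alpha> {..t} \<le> m"
      using fa.cdf_nonneg[of t] fa.cdf_bounded[of t] fbm[OF sa ea] m by (auto simp: cdf_def2)
    have Fb: "0 \<le> measure \<beta> {..t}" "measure \<beta> {..t} \<le> m"
      using fb.cdf_nonneg[of t] fb.cdf_bounded[of t] fbm[OF sb eb] m by (auto simp: cdf_def2)
    have sets: "{q::real\<times>real. fst q \<le> t \<and> \<not> snd q \<le> t} \<in> sets borel"
       "{q::real\<times>real. snd q \<le> t \<and> \<not> fst q \<le> t} \<in> sets borel"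
      by (rule sets_S1, rule sets_S2)
    have ga: "\<And>u. 0 < u \<Longrightarrow> u < m \<Longrightarrow> (?Qa u \<le> t) = (u \<le> measure \<alpha> {..t})"
      using quantile_galois[OF sa ea m] by blast
    have gb: "\<And>u. 0 < u \<Longrightarrow> u < m \<Longrightarrow> (?Qb u \<le> t) = (u \<le> measure \<beta> {..t})"
      using quantile_galois[OF sb eb m] by blast
    have e1: "?QQ -` {q. fst q \<le> t \<and> \<not> snd q \<le> t} \<inter> space ?L = {0<..<m} \<inter> {measure \<beta> {..t}<..measure \<alpha> {..t}}"
      using ga gb by (auto simp: Lfacts(1)[OF m])
    have e2: "?QQ -` {q. snd q \<le> t \<and> \<not> fst q \<le> t} \<inter> space ?L = {0<..<m} \<inter> {measure \<alpha> {..t}<..measure \<beta> {..t}}"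
      using ga gb by (auto simp: Lfacts(1)[OF m])
    have "emeasure ?g {q. fst q \<le> t \<and> \<not> snd q \<le> t} = ennreal (measure \<alpha> {..t} - measure \<beta> {..t})"
    proof -
      have "emeasure ?g {q. fst q \<le> t \<and> \<not> snd q \<le> t} = emeasure ?L (?QQ -` {q. fst q \<le> t \<and> \<not> snd q \<le> t} \<inter> space ?L)"
        by (rule emeasure_distr[OF mQQ sets(1)])
      also have "\<dots> = emeasure lborel ({0<..<m} \<inter> {measure \<beta> {..t}<..measure \<alpha> {..t}})"
        unfolding e1 by (rule Lfacts(2)[OF m]) auto
      also have "\<dots> = ennreal (measure \<alpha> {..t} - measure \<beta> {..t})"
        by (rule lborel_Ioo_Ioc) (use Fa Fb in auto)
      finally show ?thesis .
    qed
    moreover have "emeasure ?g {q. snd q \<le> t \<and> \<not> fst q \<le> t} = ennreal (measure \<beta> {..t} - measure \<alpha> {..t})"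
    proof -
      have "emeasure ?g {q. snd q \<le> t \<and> \<not> fst q \<le> t} = emeasure ?L (?QQ -` {q. snd q \<le> t \<and> \<not> fst q \<le> t} \<inter> space ?L)"
        by (rule emeasure_distr[OF mQQ sets(2)])
      also have "\<dots> = emeasure lborel ({0<..<m} \<inter> {measure \<alpha> {..t}<..measure \<beta> {..t}})"
        unfolding e2 by (rule Lfacts(2)[OF m]) auto
      also have "\<dots> = ennreal (measure \<beta> {..t} - measure \<alpha> {..t})"
        by (rule lborel_Ioo_Ioc) (use Fa Fb in auto)
      finally show ?thesis .
    qed
    ultimately show "emeasure ?g {q. fst q \<le> t \<and> \<not> snd q \<le> t} + emeasure ?g {q. snd q \<le> t \<and> \<not> fst q \<le> t}
       = ennreal \<bar>measure \<alpha> {..t} - measure \<beta> {..t}\<bar>"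
      by (cases "measure \<alpha> {..t} \<le> measure \<beta> {..t}") (auto simp: ennreal_neg)
  qed
  show "W1 \<alpha> \<beta> \<le> (\<integral>\<^sup>+ t. ennreal \<bar>measure \<alpha> {..t} - measure \<beta> {..t}\<bar> \<partial>lborel)"
    unfolding W by (rule INF_lower2[OF gc]) (simp add: cg)
  show "(\<integral>\<^sup>+ t. ennreal \<bar>measure \<alpha> {..t} - measure \<beta> {..t}\<bar> \<partial>lborel) \<le> W1 \<alpha> \<beta>"
    unfolding W
  proof (rule INF_greatest)
    fix \<gamma> assume "\<gamma> \<in> couplings \<alpha> \<beta>"
    then have "sets \<gamma> = sets (borel :: (real \<times> real) measure)" "distr \<gamma> borel fst = \<alpha>" "distr \<gamma> borel snd = \<beta>"
      unfolding couplings_def by auto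
    then show "(\<integral>\<^sup>+ t. ennreal \<bar>measure \<alpha> {..t} - measure \<beta> {..t}\<bar> \<partial>lborel) \<le> cost \<gamma>"
      using cost_lower fa by blast
  qed
qed



lemma med_facts:
  fixes \<mu> :: "real measure"
  assumes ps: "prob_space \<mu>" and sm: "sets \<mu> = sets borel"
  shows "\<And>t. t < medB \<mu> \<Longrightarrow> measure \<mu> {..t} \<le> 1/2"
    and "1/2 \<le> measure \<mu> {..medB \<mu>}"
    and "measure \<mu> {..<medB \<mu>} \<le> 1/2"
    and "measure \<mu> {..<medB \<mu>} + measure \<mu> {medB \<mu>} = measure \<mu> {..medB \<mu>}"
proof -
  interpret real_distribution \<mu> using ps sm by (simp add: real_distribution_def real_distribution_axioms_def)
  have cdf: "cdf \<mu> = (\<lambda>x. measure \<mu> {..x})" by (simp add: cdf_def2 fun_eq_iff)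
  define S where "S = {x. measure \<mu> {..x} \<le> 1/2}"
  have B: "medB \<mu> = Sup S" unfolding medB_def S_def ..
  have "eventually (\<lambda>x. measure \<mu> {..x} < 1/2) at_bot"
    using cdf_lim_at_bot unfolding cdf by (rule order_tendstoD(2)) simp
  then obtain x0 where "measure \<mu> {..x0} < 1/2" unfolding eventually_at_bot_linorder by auto
  then have ne: "S \<noteq> {}" unfolding S_def by (auto intro: less_imp_le)
  have "eventually (\<lambda>x. measure \<mu> {..x} > 1/2) at_top"
    using cdf_lim_at_top_prob unfolding cdf by (rule order_tendstoD(1)) simp
  then obtain x1 where x1: "\<And>x. x \<ge> x1 \<Longrightarrow> measure \<mu> {..x} > 1/2" unfolding eventually_at_top_linorder by auto
  have bdd: "bdd_above S" unfolding bdd_above_def S_def using x1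
    by (metis linorder_not_le mem_Collect_eq order_less_imp_le)
  have mono: "measure \<mu> {..x} \<le> measure \<mu> {..y}" if "x \<le> y" for x y
    using cdf_nondecreasing[OF that] unfolding cdf by simp
  show lt: "\<And>t. t < medB \<mu> \<Longrightarrow> measure \<mu> {..t} \<le> 1/2"
  proof -
    fix t assume "t < medB \<mu>"
    then obtain s where "s \<in> S" "t < s" unfolding B using less_cSup_iff[OF ne bdd] by auto
    then show "measure \<mu> {..t} \<le> 1/2" using mono[of t s] unfolding S_def by auto
  qed
  show "1/2 \<le> measure \<mu> {..medB \<mu>}"
  proof -
    have "eventually (\<lambda>s. 1/2 \<le> measure \<mu> {..s}) (at_right (medB \<mu>))"
    proof (rule eventually_at_rightI[of _ "medB \<mu> + 1"])
      fix s assume "s \<in> {medB \<mu><..<medB \<mu> + 1}"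
      then have "medB \<mu> < s" by simp
      then have "s \<notin> S" using cSup_upper[OF _ bdd] unfolding B by force
      then show "1/2 \<le> measure \<mu> {..s}" unfolding S_def by auto
    qed simp
    moreover have "((\<lambda>x. measure \<mu> {..x}) \<longlongrightarrow> measure \<mu> {..medB \<mu>}) (at_right (medB \<mu>))"
      using cdf_is_right_cont[of "medB \<mu>"] unfolding cdf continuous_within by simp
    ultimately show ?thesis by (intro tendsto_lowerbound) auto
  qed
  show "measure \<mu> {..<medB \<mu>} \<le> 1/2"
  proof -
    have "eventually (\<lambda>s. measure \<mu> {..s} \<le> 1/2) (at_left (medB \<mu>))"
    proof (rule eventually_at_leftI[of "medB \<mu> - 1"])
      fix s assume "s \<in> {medB \<mu> - 1<..<medB \<mu>}"
      then show "measure \<mu> {..s} \<le> 1/2" using lt[of s] by simp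
    qed simp
    moreover have "((\<lambda>x. measure \<mu> {..x}) \<longlongrightarrow> measure \<mu> {..<medB \<mu>}) (at_left (medB \<mu>))"
      using cdf_at_left[of "medB \<mu>"] unfolding cdf by simp
    ultimately show ?thesis by (intro tendsto_upperbound) auto
  qed
  have "measure \<mu> ({..<medB \<mu>} \<union> {medB \<mu>}) = measure \<mu> {..<medB \<mu>} + measure \<mu> {medB \<mu>}"
    by (rule finite_measure_Union) auto
  moreover have "{..<medB \<mu>} \<union> {medB \<mu>} = {..medB \<mu>}" by auto
  ultimately show "measure \<mu> {..<medB \<mu>} + measure \<mu> {medB \<mu>} = measure \<mu> {..medB \<mu>}" by simp
qed

lemma dens_meas:
  fixes \<mu> :: "real measure"
  assumes fm: "finite_measure \<mu>" and sm: "sets \<mu> = sets borel" and K: "K \<in> sets borel" "B \<notin> K"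
    and c: "0 \<le> c" and A: "A \<in> sets borel"
  shows "emeasure (density \<mu> (\<lambda>x. ennreal (indicator K x + (if x = B then c else 0)))) A
      = ennreal (measure \<mu> (K \<inter> A) + c * measure \<mu> ({B} \<inter> A))"
proof -
  interpret finite_measure \<mu> by fact
  have "(\<lambda>x. ennreal (indicator K x + (if x = B then c else 0))) \<in> borel_measurable borel"
    using K by measurable
  then have mf: "(\<lambda>x. ennreal (indicator K x + (if x = B then c else 0))) \<in> borel_measurable \<mu>"
    by (simp add: measurable_cong_sets[OF sm refl])
  have eq: "\<And>x. ennreal (indicator K x + (if x = B then c else 0)) * indicator A x
      = indicator (K \<inter> A) x + ennreal c * indicator ({B} \<inter> A) x"
    using K c by (auto simp: indicator_def)
  have "emeasure (density \<mu> (\<lambda>x. ennreal (indicator K x + (if x = B then c else 0)))) A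
      = (\<integral>\<^sup>+ x. ennreal (indicator K x + (if x = B then c else 0)) * indicator A x \<partial>\<mu>)"
    by (rule emeasure_density[OF mf]) (simp add: sm A)
  also have "\<dots> = (\<integral>\<^sup>+ x. (indicator (K \<inter> A) x + ennreal c * indicator ({B} \<inter> A) x) \<partial>\<mu>)"
    by (rule nn_integral_cong) (rule eq)
  also have "\<dots> = emeasure \<mu> (K \<inter> A) + ennreal c * emeasure \<mu> ({B} \<inter> A)"
  proof -
    have "indicator (K \<inter> A) \<in> borel_measurable borel" using K A by measurable
    moreover have "(\<lambda>x. ennreal c * indicator ({B} \<inter> A) x) \<in> borel_measurable borel" using K A by measurable
    ultimately have m: "indicator (K \<inter> A) \<in> borel_measurable \<mu>"
      "(\<lambda>x. ennreal c * indicator ({B} \<inter> A) x) \<in> borel_measurable \<mu>"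
      by (simp_all add: measurable_cong_sets[OF sm refl])
    show ?thesis using K A by (subst nn_integral_add[OF m]) (auto simp: sm nn_integral_cmult_indicator)
  qed
  also have "\<dots> = ennreal (measure \<mu> (K \<inter> A) + c * measure \<mu> ({B} \<inter> A))"
    using c by (simp add: emeasure_eq_measure ennreal_plus ennreal_mult)
  finally show ?thesis .
qed



lemma bcoef_facts:
  fixes \<mu> :: "real measure"
  assumes ps: "prob_space \<mu>" and sm: "sets \<mu> = sets borel"
  shows "0 \<le> bcoef \<mu>" "bcoef \<mu> \<le> 1"
    "bcoef \<mu> * measure \<mu> {medB \<mu>} = 1/2 - measure \<mu> {..<medB \<mu>}"
proof -
  note f = med_facts[OF ps sm]
  let ?a = "measure \<mu> {..<medB \<mu>}" and ?p = "measure \<mu> {medB \<mu>}"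
  have p0: "0 \<le> ?p" by simp
  show "0 \<le> bcoef \<mu>" using f(3) p0 unfolding bcoef_def by auto
  show "bcoef \<mu> \<le> 1" using f(2,4) p0 unfolding bcoef_def by (auto simp: divide_le_eq_1)
  show "bcoef \<mu> * ?p = 1/2 - ?a"
  proof (cases "?p > 0")
    case True then show ?thesis unfolding bcoef_def by simp
  next
    case False then have "?p = 0" using p0 by linarith
    then show ?thesis using f(2,3,4) unfolding bcoef_def by simp
  qed
qed

lemma lpart_props:
  fixes \<mu> :: "real measure"
  assumes ps: "prob_space \<mu>" and sm: "sets \<mu> = sets borel"
  shows "sets (lpart \<mu>) = sets borel" "emeasure (lpart \<mu>) UNIV = ennreal (1/2)"
    "\<And>t. measure (lpart \<mu>) {..t} = min (measure \<mu> {..t}) (1/2)"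
proof -
  interpret prob_space \<mu> by fact
  note f = med_facts[OF ps sm] and bf = bcoef_facts[OF ps sm]
  have D: "\<And>A. A \<in> sets borel \<Longrightarrow> emeasure (lpart \<mu>) A
     = ennreal (measure \<mu> ({..<medB \<mu>} \<inter> A) + bcoef \<mu> * measure \<mu> ({medB \<mu>} \<inter> A))"
    unfolding lpart_def by (rule dens_meas) (use sm bf in auto)
  show "sets (lpart \<mu>) = sets borel" unfolding lpart_def by (simp add: sm)
  show "emeasure (lpart \<mu>) UNIV = ennreal (1/2)" using D[of UNIV] bf(3) by simp
  fix t
  have mono: "measure \<mu> {..x} \<le> measure \<mu> {..y}" if "x \<le> y" for x y
    using that by (intro finite_measure_mono) (auto simp: sm)
  show "measure (lpart \<mu>) {..t} = min (measure \<mu> {..t}) (1/2)"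
  proof (cases "t < medB \<mu>")
    case True
    then have "{..<medB \<mu>} \<inter> {..t} = {..t}" "{medB \<mu>} \<inter> {..t} = {}" by auto
    then have "emeasure (lpart \<mu>) {..t} = ennreal (measure \<mu> {..t})" using D[of "{..t}"] by simp
    then show ?thesis using f(1)[OF True] by (simp add: measure_def)
  next
    case False
    then have "{..<medB \<mu>} \<inter> {..t} = {..<medB \<mu>}" "{medB \<mu>} \<inter> {..t} = {medB \<mu>}" by auto
    then have E: "emeasure (lpart \<mu>) {..t} = ennreal (1/2)" using D[of "{..t}"] bf(3) by simp
    have "measure (lpart \<mu>) {..t} = enn2real (ennreal (1/2))" unfolding measure_def E ..
    also have "\<dots> = 1/2" by (rule enn2real_ennreal) simp
    finally have "measure (lpart \<mu>) {..t} = 1/2" .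
    moreover have "1/2 \<le> measure \<mu> {..t}" using f(2) mono[of "medB \<mu>" t] False by simp
    ultimately show ?thesis by simp
  qed
qed

lemma rpart_props:
  fixes \<mu> :: "real measure"
  assumes ps: "prob_space \<mu>" and sm: "sets \<mu> = sets borel"
  shows "sets (rpart \<mu>) = sets borel" "emeasure (rpart \<mu>) UNIV = ennreal (1/2)"
    "\<And>t. measure (rpart \<mu>) {..t} = max (measure \<mu> {..t} - 1/2) 0"
proof -
  interpret prob_space \<mu> by fact
  note f = med_facts[OF ps sm] and bf = bcoef_facts[OF ps sm]
  have sp: "space \<mu> = UNIV" using sets_eq_imp_space_eq[OF sm] by simp
  have D: "\<And>A. A \<in> sets borel \<Longrightarrow> emeasure (rpart \<mu>) A
     = ennreal (measure \<mu> ({medB \<mu><..} \<inter> A) + (1 - bcoef \<mu>) * measure \<mu> ({medB \<mu>} \<inter> A))"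
    unfolding rpart_def by (rule dens_meas) (use sm bf in auto)
  have key: "(1 - bcoef \<mu>) * measure \<mu> {medB \<mu>} = measure \<mu> {..medB \<mu>} - 1/2"
    using bf(3) f(4) by (simp add: algebra_simps)
  show "sets (rpart \<mu>) = sets borel" unfolding rpart_def by (simp add: sm)
  have "measure \<mu> {medB \<mu><..} = 1 - measure \<mu> {..medB \<mu>}"
  proof -
    have "{medB \<mu><..} = space \<mu> - {..medB \<mu>}" by (auto simp: sp)
    then show ?thesis by (simp add: prob_compl sm)
  qed
  then show "emeasure (rpart \<mu>) UNIV = ennreal (1/2)" using D[of UNIV] key by simp
  fix t
  have mono: "measure \<mu> {..x} \<le> measure \<mu> {..y}" if "x \<le> y" for x y
    using that by (intro finite_measure_mono) (auto simp: sm)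
  show "measure (rpart \<mu>) {..t} = max (measure \<mu> {..t} - 1/2) 0"
  proof (cases "t < medB \<mu>")
    case True
    then have "{medB \<mu><..} \<inter> {..t} = {}" "{medB \<mu>} \<inter> {..t} = {}" by auto
    then have "emeasure (rpart \<mu>) {..t} = 0" using D[of "{..t}"] by simp
    then show ?thesis using f(1)[OF True] by (simp add: measure_def)
  next
    case False
    then have "{medB \<mu><..} \<inter> {..t} = {..t} - {..medB \<mu>}" "{medB \<mu>} \<inter> {..t} = {medB \<mu>}" by auto
    moreover have "measure \<mu> ({..t} - {..medB \<mu>}) = measure \<mu> {..t} - measure \<mu> {..medB \<mu>}"
      using False by (intro finite_measure_Diff) (auto simp: sm)
    ultimately have "emeasure (rpart \<mu>) {..t} = ennreal (measure \<mu> {..t} - 1/2)"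
      using D[of "{..t}"] key by simp
    moreover have "1/2 \<le> measure \<mu> {..t}" using f(2) mono[of "medB \<mu>" t] False by simp
    ultimately show ?thesis by (simp add: measure_def)
  qed
qed



lemma cdf_meas:
  fixes \<mu> :: "real measure"
  assumes ps: "prob_space \<mu>" and sm: "sets \<mu> = sets borel"
  shows "(\<lambda>t. measure \<mu> {..t}) \<in> borel_measurable lborel"
proof -
  interpret prob_space \<mu> by fact
  have "mono (\<lambda>t. measure \<mu> {..t})"
    unfolding mono_def by (auto intro!: finite_measure_mono simp: sm)
  then show ?thesis using borel_measurable_mono by simp
qed

lemma split_abs:
  fixes a b :: real
  shows "\<bar>a - b\<bar> = \<bar>min a (1/2) - min b (1/2)\<bar> + \<bar>max (a - 1/2) 0 - max (b - 1/2) 0\<bar>"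
  by (auto simp: min_def max_def abs_if)

theorem lemma6p4:
  fixes \<mu> \<nu> :: "real measure"
  assumes "prob_space \<mu>" and "sets \<mu> = sets borel"
    and "prob_space \<nu>" and "sets \<nu> = sets borel"
  shows "W1 \<mu> \<nu> = W1 (lpart \<mu>) (lpart \<nu>) + W1 (rpart \<mu>) (rpart \<nu>)"
proof -
  have e1: "emeasure \<mu> UNIV = ennreal 1"
    using prob_space.emeasure_space_1[OF assms(1)] sets_eq_imp_space_eq[OF assms(2)] by simp
  have e2: "emeasure \<nu> UNIV = ennreal 1"
    using prob_space.emeasure_space_1[OF assms(3)] sets_eq_imp_space_eq[OF assms(4)] by simp
  note lm = lpart_props[OF assms(1,2)] and ln = lpart_props[OF assms(3,4)]
  note rm = rpart_props[OF assms(1,2)] and rn = rpart_props[OF assms(3,4)]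
  have [measurable]: "(\<lambda>t. measure \<mu> {..t}) \<in> borel_measurable lborel"
    "(\<lambda>t. measure \<nu> {..t}) \<in> borel_measurable lborel"
    using cdf_meas assms by auto
  have "W1 (lpart \<mu>) (lpart \<nu>) + W1 (rpart \<mu>) (rpart \<nu>)
    = (\<integral>\<^sup>+ t. ennreal \<bar>min (measure \<mu> {..t}) (1/2) - min (measure \<nu> {..t}) (1/2)\<bar> \<partial>lborel)
    + (\<integral>\<^sup>+ t. ennreal \<bar>max (measure \<mu> {..t} - 1/2) 0 - max (measure \<nu> {..t} - 1/2) 0\<bar> \<partial>lborel)"
    by (simp add: W1_cdf[OF lm(1,2) ln(1,2)] W1_cdf[OF rm(1,2) rn(1,2)] lm(3) ln(3) rm(3) rn(3))
  also have "\<dots> = (\<integral>\<^sup>+ t. (ennreal \<bar>min (measure \<mu> {..t}) (1/2) - min (measure \<nu> {..t}) (1/2)\<bar>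
      + ennreal \<bar>max (measure \<mu> {..t} - 1/2) 0 - max (measure \<nu> {..t} - 1/2) 0\<bar>) \<partial>lborel)"
    by (rule nn_integral_add[symmetric]) measurable
  also have "\<dots> = (\<integral>\<^sup>+ t. ennreal \<bar>measure \<mu> {..t} - measure \<nu> {..t}\<bar> \<partial>lborel)"
    by (rule nn_integral_cong) (simp add: ennreal_plus[symmetric] split_abs[symmetric] del: ennreal_plus)
  also have "\<dots> = W1 \<mu> \<nu>"
    by (rule W1_cdf[OF assms(2) e1 assms(4) e2, symmetric]) simp
  finally show ?thesis ..
qed

end
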